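(* The pointwise limit $\bar V=\lim_{n\to\infty}V^n$ equals the optimal value function $V^{[0,\bar c]}$ on $[0,\infty)\times[0,\bar c]$.
   Context: Let $(W_t)_{t\ge0}$ be a standard Brownian motion and $X_t=x+\mu t+\sigma W_t$ with constants $\mu\in\mathbb R$, $\sigma>0$ and initial value $x\ge 0$; $(\mathcal F_t)_{t\ge0}$ is the completed filtration generated by $X$. Fix $q>0$, $\Lambda>0$, $\bar c>0$. For a set $S\subset[0,\bar c]$, $x\ge0$ and $c\in S$, $\Pi^S_{x,c}$ denotes the set of processes $C=(C_t)_{t\ge0}$ that are non-increasing, right-continuous, $(\mathcal F_t)$-adapted, take values in $S$, and satisfy $C_t\le c$ for all $t\ge 0$ (an immediate reduction at time $0$ is allowed). For such $C$, $X^C_t=X_t-\int_0^t C_s\,ds$, $\tau=\inf\{t\ge0: X^C_t<0\}$, $J(x;C)=\mathbb E\big[\int_0^{\tau}e^{-qs}(C_s+\Lambda)\,ds\big]$ and $V^S(x,c)=\sup_{C\in\Pi^S_{x,c}}J(x;C)$. Let $(\mathcal S^n)_{n\ge0}$ be finite sets with $\{0,\bar c\}=\mathcal S^0\subset\mathcal S^1\subset\cdots\subset[0,\bar c]$, each containing $0$ and $\bar c$, whose mesh size $\delta(\mathcal S^n)$ (maximal gap between consecutive elements) tends to $0$. For $(x,c)\in[0,\infty)\times[0,\bar c]$ let $\tilde c^n=\max\{c'\in\mathcal S^n: c'\le c\}$ and $V^n(x,c)=V^{\mathcal S^n}(x,\tilde c^n)$. Then $V^n(x,c)$ is non-decreasing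 in $n$ and bounded by $V^{[0,\bar c]}(x,c)$, and $\bar V(x,c):=\lim_{n\to\infty}V^n(x,c)$. *)

theory Defs
  imports "HOL-Probability.Probability"
begin

definition std_brownian_motion :: "'a measure \<Rightarrow> (real \<Rightarrow> 'a \<Rightarrow> real) \<Rightarrow> bool" where
  "std_brownian_motion M W \<longleftrightarrow>
     prob_space M \<and>
     (\<forall>t. W t \<in> borel_measurable M) \<and>
     (\<forall>\<omega>\<in>space M. W 0 \<omega> = 0 \<and> continuous_on {0..} (\<lambda>t. W t \<omega>)) \<and>
     (\<forall>s t. 0 \<le> s \<and> s < t \<longrightarrow>
        distributed M lborel (\<lambda>\<omega>. W t \<omega> - W s \<omega>)
          (\<lambda>y. ennreal (normal_density 0 (sqrt (t - s)) y))) \<and>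
     (\<forall>ts::real list. sorted_wrt (<) ts \<and> (\<forall>t\<in>set ts. 0 \<le> t) \<longrightarrow>
        prob_space.indep_vars M (\<lambda>_. borel)
          (\<lambda>i \<omega>. W (ts ! Suc i) \<omega> - W (ts ! i) \<omega>) {..<length ts - 1})"

definition gen_filtration :: "'a measure \<Rightarrow> (real \<Rightarrow> 'a \<Rightarrow> real) \<Rightarrow> real \<Rightarrow> 'a measure" where
  "gen_filtration M X t = sigma (space M)
     ({X s -` B \<inter> space M | s B. 0 \<le> s \<and> s \<le> t \<and> B \<in> sets borel} \<union> null_sets (completion M))"

text \<open>Admissible controls Pi^S_{x,c} (X already contains the initial value x).\<close>
definition admissible :: "'a measure \<Rightarrow> (real \<Rightarrow> 'a \<Rightarrow> real) \<Rightarrow> real set \<Rightarrow> real \<Rightarrow> (real \<Rightarrow> 'a \<Rightarrow> real) set" where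
  "admissible M X S c = {C.
     (\<forall>\<omega>\<in>space M. \<forall>s t. 0 \<le> s \<and> s \<le> t \<longrightarrow> C t \<omega> \<le> C s \<omega>) \<and>
     (\<forall>\<omega>\<in>space M. \<forall>t\<ge>0. continuous (at_right t) (\<lambda>s. C s \<omega>)) \<and>
     (\<forall>\<omega>\<in>space M. \<forall>t\<ge>0. C t \<omega> \<in> S \<and> C t \<omega> \<le> c) \<and>
     (\<forall>t\<ge>0. C t \<in> borel_measurable (gen_filtration M X t))}"

definition controlled :: "(real \<Rightarrow> 'a \<Rightarrow> real) \<Rightarrow> (real \<Rightarrow> 'a \<Rightarrow> real) \<Rightarrow> real \<Rightarrow> 'a \<Rightarrow> real" where
  "controlled X C t \<omega> = X t \<omega> - integral {0..t} (\<lambda>s. C s \<omega>)"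

definition ruin_time :: "(real \<Rightarrow> 'a \<Rightarrow> real) \<Rightarrow> (real \<Rightarrow> 'a \<Rightarrow> real) \<Rightarrow> 'a \<Rightarrow> ereal" where
  "ruin_time X C \<omega> = (INF t\<in>{t. 0 \<le> t \<and> controlled X C t \<omega> < 0}. ereal t)"

definition payoff :: "'a measure \<Rightarrow> (real \<Rightarrow> 'a \<Rightarrow> real) \<Rightarrow> real \<Rightarrow> real \<Rightarrow> (real \<Rightarrow> 'a \<Rightarrow> real) \<Rightarrow> ennreal" where
  "payoff M X q \<Lambda> C = (\<integral>\<^sup>+ \<omega>. (\<integral>\<^sup>+ s. indicator {s. 0 \<le> s \<and> ereal s < ruin_time X C \<omega>} s
        * ennreal (exp (- q * s) * (C s \<omega> + \<Lambda>)) \<partial>lborel) \<partial>M)"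

definition value_fun :: "'a measure \<Rightarrow> (real \<Rightarrow> 'a \<Rightarrow> real) \<Rightarrow> real \<Rightarrow> real \<Rightarrow> real set \<Rightarrow> real \<Rightarrow> ennreal" where
  "value_fun M X q \<Lambda> S c = (SUP C\<in>admissible M X S c. payoff M X q \<Lambda> C)"

definition mesh :: "real set \<Rightarrow> real" where
  "mesh S = Sup {s' - s | s s'. s \<in> S \<and> s' \<in> S \<and> s < s' \<and> S \<inter> {s<..<s'} = {}}"

definition round_down :: "real set \<Rightarrow> real \<Rightarrow> real" where
  "round_down S c = Max {c' \<in> S. c' \<le> c}"

end

theory Submission
  imports Defs
begin

lemma nn_integral_add_le_meas:
  assumes g: "g \<in> borel_measurable M"
  shows "(\<integral>\<^sup>+ x. f x + g x \<partial>M) \<le> integral\<^sup>N M f + integral\<^sup>N M g"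
  unfolding nn_integral_def_finite[of M "\<lambda>x. f x + g x"]
proof (rule SUP_least, safe)
  fix h assume h: "simple_function M h" "h \<le> (\<lambda>x. f x + g x)" "\<forall>x. h x < top"
  have hm: "h \<in> borel_measurable M" using h(1) by (rule borel_measurable_simple_function)
  have "integral\<^sup>S M h = integral\<^sup>N M h" using h(1) by (simp add: nn_integral_eq_simple_integral)
  also have "\<dots> \<le> (\<integral>\<^sup>+ x. (h x - g x) + g x \<partial>M)"
    by (intro nn_integral_mono) (use ennreal_minus_le_iff in \<open>metis add.commute order_refl\<close>)
  also have "\<dots> = (\<integral>\<^sup>+ x. (h x - g x) \<partial>M) + integral\<^sup>N M g"
    by (rule nn_integral_add) (use hm g in auto)
  also have "\<dots> \<le> integral\<^sup>N M f + integral\<^sup>N M g"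
  proof -
    have "(\<integral>\<^sup>+ x. (h x - g x) \<partial>M) \<le> integral\<^sup>N M f"
    proof (intro nn_integral_mono)
      fix x have "h x \<le> f x + g x" using h(2) by (auto simp: le_fun_def)
      then show "h x - g x \<le> f x" using h(3)[rule_format, of x] by (auto simp add: ennreal_minus_le_iff add.commute)
    qed
    then show ?thesis by (rule add_right_mono)
  qed
  finally show "integral\<^sup>S M h \<le> integral\<^sup>N M f + integral\<^sup>N M g" .
qed

lemma nn_integral_expdens:
  assumes "0 < l"
  shows "(\<integral>\<^sup>+ x. ennreal (exponential_density l x) \<partial>lborel) = 1"
proof -
  interpret P: prob_space "density lborel (\<lambda>x. ennreal (exponential_density l x))"
    using prob_space_exponential_density[OF assms] .
  have "emeasure (density lborel (\<lambda>x. ennreal (exponential_density l x))) UNIV = 1"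
    using P.emeasure_space_1 by simp
  then show ?thesis by (simp add: emeasure_density)
qed

definition rdl :: "real set \<Rightarrow> real \<Rightarrow> real" where
  "rdl S y = (if y \<le> 0 then 0 else Max {g\<in>S. g < y})"

lemma rdl_in: assumes "finite S" "0 \<in> S" shows "rdl S y \<in> S"
proof (cases "y \<le> 0")
  case False
  have "{g\<in>S. g < y} \<noteq> {}" using False assms by auto
  then have "Max {g\<in>S. g < y} \<in> {g\<in>S. g < y}" using assms by (intro Max_in) auto
  then show ?thesis using False by (simp add: rdl_def)
qed (use assms in \<open>simp add: rdl_def\<close>)

lemma rdl_less: assumes "finite S" "0 \<in> S" "0 < y" shows "rdl S y < y"
proof -
  have "{g\<in>S. g < y} \<noteq> {}" using assms by auto
  then have "Max {g\<in>S. g < y} \<in> {g\<in>S. g < y}" using assms by (intro Max_in) auto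
  then show ?thesis using assms by (simp add: rdl_def)
qed

lemma rdl_le: assumes "finite S" "0 \<in> S" "0 \<le> y" shows "rdl S y \<le> y"
proof (cases "y = 0")
  case False then show ?thesis using rdl_less[OF assms(1,2)] assms(3) by (simp add: less_imp_le)
qed (simp add: rdl_def)

lemma rdl_nonneg: assumes "finite S" "S \<subseteq> {0..}" "0 \<in> S" shows "0 \<le> rdl S y"
  using rdl_in[OF assms(1,3)] assms(2) by auto

lemma rdl_ge: assumes "finite S" "g \<in> S" "g < y" "0 < y" shows "g \<le> rdl S y"
  using assms by (auto simp: rdl_def intro!: Max_ge)

lemma rdl_mono: assumes "finite S" "S \<subseteq> {0..}" "0 \<in> S" shows "mono (rdl S)"
proof (rule monoI)
  fix a b :: real assume ab: "a \<le> b"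
  show "rdl S a \<le> rdl S b"
  proof (cases "a \<le> 0")
    case True then show ?thesis using rdl_nonneg[OF assms] by (simp add: rdl_def)
  next
    case False
    have "rdl S a \<in> S" "rdl S a < a" using rdl_in rdl_less assms False by auto
    then show ?thesis using rdl_ge[OF assms(1)] ab False by auto
  qed
qed

lemma rdl_const: assumes "finite S" "0 \<in> S" "0 < y" "rdl S y < z" "z \<le> y" "S \<subseteq> {0..}"
  shows "rdl S z = rdl S y"
proof -
  have z: "0 < z" using assms(4) rdl_nonneg[OF assms(1,6,2), of y] by linarith
  have "rdl S z \<in> S" "rdl S z < z" using rdl_in rdl_less assms z by auto
  then have "rdl S z \<le> rdl S y" using rdl_ge[OF assms(1)] assms by auto
  moreover have "rdl S y \<le> rdl S z" using rdl_ge[OF assms(1) rdl_in[OF assms(1,2)] assms(4) z] .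
  ultimately show ?thesis by simp
qed

lemma mesh_ge:
  assumes "finite S" "a \<in> S" "b \<in> S" "a < b" "S \<inter> {a<..<b} = {}"
  shows "b - a \<le> mesh S"
proof -
  let ?G = "{s' - s | s s'. s \<in> S \<and> s' \<in> S \<and> s < s' \<and> S \<inter> {s<..<s'} = {}}"
  have "?G \<subseteq> (\<lambda>(s,s'). s' - s) ` (S \<times> S)" by auto
  then have "finite ?G" using assms(1) by (meson finite_SigmaI finite_imageI finite_subset)
  moreover have "b - a \<in> ?G" using assms by blast
  ultimately show ?thesis unfolding mesh_def by (meson bdd_above_finite cSup_upper)
qed

lemma rdl_gap_pos:
  assumes "finite S" "S \<subseteq> {0..cbar}" "0 \<in> S" "cbar \<in> S" "0 < y" "y \<le> cbar"
  shows "y - rdl S y \<le> mesh S"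
proof -
  have y: "0 < y" using assms by auto
  define b where "b = Min {g\<in>S. y \<le> g}"
  have ne: "{g\<in>S. y \<le> g} \<noteq> {}" using assms by auto
  have b: "b \<in> S" "y \<le> b" using Min_in[OF _ ne] assms(1) by (auto simp: b_def)
  have bmin: "\<And>g. g \<in> S \<Longrightarrow> y \<le> g \<Longrightarrow> b \<le> g" using assms(1) by (auto simp: b_def)
  have a: "rdl S y \<in> S" "rdl S y < y" using rdl_in rdl_less assms y by auto
  have "S \<inter> {rdl S y<..<b} = {}"
  proof (rule ccontr)
    assume "S \<inter> {rdl S y<..<b} \<noteq> {}"
    then obtain g where g: "g \<in> S" "rdl S y < g" "g < b" by auto
    show False
    proof (cases "g < y")
      case True then show False using rdl_ge[OF assms(1) g(1) True y] g by simp
    next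
      case False then show False using bmin[OF g(1)] g by simp
    qed
  qed
  then have "b - rdl S y \<le> mesh S" using mesh_ge[OF assms(1) a(1) b(1)] a b by simp
  then show ?thesis using b by simp
qed

lemma mesh_pos:
  assumes "finite S" "S \<subseteq> {0..cbar}" "0 \<in> S" "cbar \<in> S" "0 < cbar"
  shows "0 < mesh S"
  using rdl_gap_pos[OF assms(1-4) assms(5) order_refl] rdl_less[OF assms(1,3,5)] by simp

lemma rdl_gap:
  assumes "finite S" "S \<subseteq> {0..cbar}" "0 \<in> S" "cbar \<in> S" "0 \<le> y" "y \<le> cbar" "0 < cbar"
  shows "y - rdl S y \<le> mesh S"
proof (cases "y = 0")
  case True then show ?thesis using mesh_pos[OF assms(1-4,7)] by (simp add: rdl_def)
next
  case False then show ?thesis using rdl_gap_pos[OF assms(1-4) _ assms(6)] assms(5) by simp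
qed

lemma approx:
  fixes M :: "'a measure" and X C :: "real \<Rightarrow> 'a \<Rightarrow> real"
  assumes fin: "finite S" and sub: "S \<subseteq> {0..cbar}" and S0: "0 \<in> S" and Sc: "cbar \<in> S"
    and cpos: "0 < cbar" and P: "prob_space M" and q: "0 < q" and L: "0 < \<Lambda>" and c0: "0 \<le> c"
    and C: "C \<in> admissible M X {0..cbar} c"
  shows "payoff M X q \<Lambda> C \<le> value_fun M X q \<Lambda> S (round_down S c) + ennreal (mesh S / q)"
proof -
  define D where "D = (\<lambda>t \<omega>. rdl S (C t \<omega>))"
  have Cmono: "\<And>\<omega> s t. \<omega> \<in> space M \<Longrightarrow> 0 \<le> s \<Longrightarrow> s \<le> t \<Longrightarrow> C t \<omega> \<le> C s \<omega>"
    and Crc: "\<And>\<omega> t. \<omega> \<in> space M \<Longrightarrow> 0 \<le> t \<Longrightarrow> continuous (at_right t) (\<lambda>s. C s \<omega>)"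
    and Cval: "\<And>\<omega> t. \<omega> \<in> space M \<Longrightarrow> 0 \<le> t \<Longrightarrow> C t \<omega> \<in> {0..cbar} \<and> C t \<omega> \<le> c"
    and Cmeas: "\<And>t. 0 \<le> t \<Longrightarrow> C t \<in> borel_measurable (gen_filtration M X t)"
    using C unfolding admissible_def by auto
  have S0': "S \<subseteq> {0..}" using sub by auto
  have rmono: "mono (rdl S)" using rdl_mono[OF fin S0' S0] .
  have rd: "rdl S y \<le> round_down S c" if "0 \<le> y" "y \<le> c" for y
  proof -
    have "rdl S y \<in> {c' \<in> S. c' \<le> c}" using rdl_in[OF fin S0] rdl_le[OF fin S0 that(1)] that by auto
    then show ?thesis unfolding round_down_def using fin by (intro Max_ge) auto
  qed
  have DA: "D \<in> admissible M X S (round_down S c)"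
    unfolding admissible_def
  proof (safe)
    fix \<omega> and s t :: real assume "\<omega> \<in> space M" "0 \<le> s" "s \<le> t"
    then show "D t \<omega> \<le> D s \<omega>" unfolding D_def using Cmono rmono by (simp add: monoD)
  next
    fix \<omega> and t :: real assume \<omega>: "\<omega> \<in> space M" and t: "0 \<le> t"
    have ev: "\<forall>\<^sub>F s in at_right t. D s \<omega> = D t \<omega>"
    proof (cases "C t \<omega> = 0")
      case True
      show ?thesis using eventually_at_right_less[of t]
      proof (rule eventually_mono)
        fix s assume "t < s"
        then have "C s \<omega> = 0" using Cmono[OF \<omega> t, of s] Cval[OF \<omega>, of s] True t by auto
        then show "D s \<omega> = D t \<omega>" using True by (simp add: D_def)
      qed
    next
      case False
      then have pos: "0 < C t \<omega>" using Cval[OF \<omega> t] by auto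
      have "((\<lambda>s. C s \<omega>) \<longlongrightarrow> C t \<omega>) (at_right t)"
        using Crc[OF \<omega> t] by (simp add: continuous_within)
      then have e1: "\<forall>\<^sub>F s in at_right t. rdl S (C t \<omega>) < C s \<omega>"
        using rdl_less[OF fin S0 pos] by (rule order_tendstoD(1))
      show ?thesis using eventually_conj[OF e1 eventually_at_right_less[of t]]
      proof (rule eventually_mono)
        fix s assume "rdl S (C t \<omega>) < C s \<omega> \<and> t < s"
        then show "D s \<omega> = D t \<omega>" unfolding D_def
          using rdl_const[OF fin S0 pos, of "C s \<omega>", OF _ _ S0'] Cmono[OF \<omega> t, of s] by auto
      qed
    qed
    have "((\<lambda>s. D s \<omega>) \<longlongrightarrow> D t \<omega>) (at_right t)"
      by (rule tendsto_eventually[OF ev])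
    then show "continuous (at_right t) (\<lambda>s. D s \<omega>)" by (simp add: continuous_within)
  next
    fix \<omega> and t :: real assume "\<omega> \<in> space M" "0 \<le> t"
    then show "D t \<omega> \<in> S" unfolding D_def using rdl_in[OF fin S0] by auto
  next
    fix \<omega> and t :: real assume \<omega>: "\<omega> \<in> space M" and t: "0 \<le> t"
    then show "D t \<omega> \<le> round_down S c" unfolding D_def using rd Cval[OF \<omega> t] by auto
  next
    fix t :: real assume t: "0 \<le> t"
    show "D t \<in> borel_measurable (gen_filtration M X t)"
      unfolding D_def using measurable_compose[OF Cmeas[OF t] borel_measurable_mono[OF rmono]] by simp
  qed
  have Dle: "D s \<omega> \<le> C s \<omega>" if "\<omega> \<in> space M" "0 \<le> s" for s \<omega>
    unfolding D_def using rdl_le[OF fin S0] Cval[OF that] by auto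
  have Dgap: "C s \<omega> - D s \<omega> \<le> mesh S" if "\<omega> \<in> space M" "0 \<le> s" for s \<omega>
    unfolding D_def using rdl_gap[OF fin sub S0 Sc _ _ cpos] Cval[OF that] by auto
  have Dnn: "0 \<le> D s \<omega>" for s \<omega>
    unfolding D_def using rdl_nonneg[OF fin S0' S0] by auto
  have int_le: "integral {0..t} (\<lambda>s. D s \<omega>) \<le> integral {0..t} (\<lambda>s. C s \<omega>)"
    if \<omega>: "\<omega> \<in> space M" and t: "0 \<le> t" for \<omega> t
  proof -
    have m1: "mono_on {0..t} (\<lambda>s. - C s \<omega>)" using Cmono[OF \<omega>] by (auto simp: mono_on_def)
    have m2: "mono_on {0..t} (\<lambda>s. - D s \<omega>)"
      using Cmono[OF \<omega>] rmono by (auto simp: mono_on_def D_def monoD)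
    have i1: "(\<lambda>s. C s \<omega>) integrable_on {0..t}"
      using integrable_neg[OF integrable_on_mono_on[OF m1]] by simp
    have i2: "(\<lambda>s. D s \<omega>) integrable_on {0..t}"
      using integrable_neg[OF integrable_on_mono_on[OF m2]] by simp
    show ?thesis using i1 i2 Dle[OF \<omega>] by (intro integral_le) auto
  qed
  have ruin: "ruin_time X C \<omega> \<le> ruin_time X D \<omega>" if \<omega>: "\<omega> \<in> space M" for \<omega>
    unfolding ruin_time_def
  proof (rule INF_superset_mono)
    show "{t. 0 \<le> t \<and> controlled X D t \<omega> < 0} \<subseteq> {t. 0 \<le> t \<and> controlled X C t \<omega> < 0}"
      using int_le[OF \<omega>] by (force simp: controlled_def)
  qed simp
  define K where "K = ennreal (mesh S / q)"
  have inner: "(\<integral>\<^sup>+ s. indicator {s. 0 \<le> s \<and> ereal s < ruin_time X C \<omega>} s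
        * ennreal (exp (- q * s) * (C s \<omega> + \<Lambda>)) \<partial>lborel)
     \<le> (\<integral>\<^sup>+ s. indicator {s. 0 \<le> s \<and> ereal s < ruin_time X D \<omega>} s
        * ennreal (exp (- q * s) * (D s \<omega> + \<Lambda>)) \<partial>lborel) + K"
    if \<omega>: "\<omega> \<in> space M" for \<omega>
  proof -
    have mpos: "0 \<le> mesh S / q" using mesh_pos[OF fin sub S0 Sc cpos] q by simp
    have "(\<integral>\<^sup>+ s. indicator {s. 0 \<le> s \<and> ereal s < ruin_time X C \<omega>} s
        * ennreal (exp (- q * s) * (C s \<omega> + \<Lambda>)) \<partial>lborel)
      \<le> (\<integral>\<^sup>+ s. indicator {s. 0 \<le> s \<and> ereal s < ruin_time X D \<omega>} s
        * ennreal (exp (- q * s) * (D s \<omega> + \<Lambda>)) + K * ennreal (exponential_density q s) \<partial>lborel)"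
    proof (rule nn_integral_mono)
      fix s :: real
      show "indicator {s. 0 \<le> s \<and> ereal s < ruin_time X C \<omega>} s * ennreal (exp (- q * s) * (C s \<omega> + \<Lambda>))
        \<le> indicator {s. 0 \<le> s \<and> ereal s < ruin_time X D \<omega>} s * ennreal (exp (- q * s) * (D s \<omega> + \<Lambda>))
           + K * ennreal (exponential_density q s)"
      proof (cases "0 \<le> s \<and> ereal s < ruin_time X C \<omega>")
        case True
        then have s: "0 \<le> s" and sD: "ereal s < ruin_time X D \<omega>" using ruin[OF \<omega>] by auto
        have eK: "K * ennreal (exponential_density q s) = ennreal (mesh S * exp (- q * s))"
          unfolding K_def using s q mpos
          by (simp add: exponential_density_def erlang_density_def ennreal_mult[symmetric] mult.commute)
        have gap: "C s \<omega> - D s \<omega> \<le> mesh S" using Dgap[OF \<omega> s] .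
        have "exp (- q * s) * (C s \<omega> + \<Lambda>) \<le> exp (- q * s) * (D s \<omega> + \<Lambda>) + mesh S * exp (- q * s)"
        proof -
          have "exp (- q * s) * (C s \<omega> + \<Lambda>) \<le> exp (- q * s) * (D s \<omega> + \<Lambda> + mesh S)"
            using gap by (intro mult_left_mono) auto
          then show ?thesis by (simp add: algebra_simps)
        qed
        then have "ennreal (exp (- q * s) * (C s \<omega> + \<Lambda>)) \<le> ennreal (exp (- q * s) * (D s \<omega> + \<Lambda>) + mesh S * exp (- q * s))"
          by (rule ennreal_leI)
        also have "\<dots> = ennreal (exp (- q * s) * (D s \<omega> + \<Lambda>)) + ennreal (mesh S * exp (- q * s))"
          using Dnn[of s \<omega>] L mpos q by (intro ennreal_plus) (auto simp: zero_le_divide_iff)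
        finally show ?thesis using True sD s eK by simp
      qed simp
    qed
    also have "\<dots> \<le> (\<integral>\<^sup>+ s. indicator {s. 0 \<le> s \<and> ereal s < ruin_time X D \<omega>} s
        * ennreal (exp (- q * s) * (D s \<omega> + \<Lambda>)) \<partial>lborel) + (\<integral>\<^sup>+ s. K * ennreal (exponential_density q s) \<partial>lborel)"
      by (rule nn_integral_add_le_meas) measurable
    also have "(\<integral>\<^sup>+ s. K * ennreal (exponential_density q s) \<partial>lborel) = K"
      using nn_integral_expdens[OF q] by (simp add: nn_integral_cmult)
    finally show ?thesis .
  qed
  have "payoff M X q \<Lambda> C \<le> (\<integral>\<^sup>+ \<omega>. (\<integral>\<^sup>+ s. indicator {s. 0 \<le> s \<and> ereal s < ruin_time X D \<omega>} s
        * ennreal (exp (- q * s) * (D s \<omega> + \<Lambda>)) \<partial>lborel) + K \<partial>M)"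
    unfolding payoff_def by (rule nn_integral_mono) (rule inner)
  also have "\<dots> \<le> payoff M X q \<Lambda> D + (\<integral>\<^sup>+ \<omega>. K \<partial>M)"
    unfolding payoff_def by (rule nn_integral_add_le_meas) simp
  also have "(\<integral>\<^sup>+ \<omega>. K \<partial>M) = K"
    using prob_space.emeasure_space_1[OF P] by simp
  also have "payoff M X q \<Lambda> D \<le> value_fun M X q \<Lambda> S (round_down S c)"
    unfolding value_fun_def using DA by (rule SUP_upper)
  finally show ?thesis by (simp add: K_def add_right_mono)
qed

theorem theorem5p2:
  fixes M :: "'a measure" and W :: "real \<Rightarrow> 'a \<Rightarrow> real"
    and \<mu> \<sigma> q \<Lambda> cbar x c :: real
    and Sn :: "nat \<Rightarrow> real set"
  assumes BM: "std_brownian_motion M W"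
    and sigma_pos: "\<sigma> > 0" and q_pos: "q > 0" and Lambda_pos: "\<Lambda> > 0" and cbar_pos: "cbar > 0"
    and S0: "Sn 0 = {0, cbar}"
    and S_mono: "\<And>n. Sn n \<subseteq> Sn (Suc n)"
    and S_finite: "\<And>n. finite (Sn n)"
    and S_sub: "\<And>n. Sn n \<subseteq> {0..cbar}"
    and S_ends: "\<And>n. 0 \<in> Sn n \<and> cbar \<in> Sn n"
    and S_mesh: "(\<lambda>n. mesh (Sn n)) \<longlonglongrightarrow> 0"
    and x_nonneg: "x \<ge> 0"
    and c_range: "c \<in> {0..cbar}"
  shows "(\<lambda>n. value_fun M (\<lambda>t \<omega>. x + \<mu> * t + \<sigma> * W t \<omega>) q \<Lambda> (Sn n) (round_down (Sn n) c))
           \<longlonglongrightarrow> value_fun M (\<lambda>t \<omega>. x + \<mu> * t + \<sigma> * W t \<omega>) q \<Lambda> {0..cbar} c"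
proof -
  define X where "X = (\<lambda>t \<omega>. x + \<mu> * t + \<sigma> * W t \<omega>)"
  define V where "V n = value_fun M X q \<Lambda> (Sn n) (round_down (Sn n) c)" for n
  define Vb where "Vb = value_fun M X q \<Lambda> {0..cbar} c"
  define K where "K n = ennreal (mesh (Sn n) / q)" for n
  have P: "prob_space M" using BM unfolding std_brownian_motion_def by simp
  have c0: "0 \<le> c" and cc: "c \<le> cbar" using c_range by auto
  have rdc: "round_down (Sn n) c \<le> c" for n
  proof -
    have "{c' \<in> Sn n. c' \<le> c} \<noteq> {}" using S_ends[of n] c0 by auto
    then have "round_down (Sn n) c \<in> {c' \<in> Sn n. c' \<le> c}"
      unfolding round_down_def using S_finite[of n] by (intro Max_in) auto
    then show ?thesis by simp
  qed
  have up: "V n \<le> Vb" for n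
    unfolding V_def Vb_def value_fun_def
  proof (rule SUP_subset_mono)
    show "admissible M X (Sn n) (round_down (Sn n) c) \<subseteq> admissible M X {0..cbar} c"
      unfolding admissible_def using S_sub[of n] rdc[of n] by (auto simp: subset_iff atLeastAtMost_iff) (meson order_trans)
  qed simp
  have low: "Vb \<le> V n + K n" for n
    unfolding Vb_def value_fun_def
  proof (rule SUP_least)
    fix C assume "C \<in> admissible M X {0..cbar} c"
    then show "payoff M X q \<Lambda> C \<le> V n + K n"
      unfolding V_def K_def
      using approx[OF S_finite[of n] S_sub[of n] conjunct1[OF S_ends[of n]] conjunct2[OF S_ends[of n]]
          cbar_pos P q_pos Lambda_pos c0] by simp
  qed
  have Kt: "K \<longlonglongrightarrow> 0"
  proof -
    have "(\<lambda>n. mesh (Sn n) / q) \<longlonglongrightarrow> 0 / q" by (intro tendsto_divide S_mesh tendsto_const) (use q_pos in auto)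
    then have "K \<longlonglongrightarrow> ennreal 0" unfolding K_def by (intro tendsto_ennrealI) simp
    then show ?thesis by simp
  qed
  have "V \<longlonglongrightarrow> Vb"
  proof (cases "Vb = top")
    case True
    have "V n = top" for n
    proof -
      have "V n + K n = top" using low[of n] True by (simp add: top_unique)
      then show ?thesis by (simp add: K_def)
    qed
    then have "V = (\<lambda>_. top)" by auto
    then show ?thesis using True by simp
  next
    case False
    have lo: "(\<lambda>n. Vb - K n) \<longlonglongrightarrow> Vb - 0"
      by (intro tendsto_diff_ennreal tendsto_const Kt False) simp
    show ?thesis
    proof (rule tendsto_sandwich[OF _ _ _ tendsto_const])
      show "\<forall>\<^sub>F n in sequentially. Vb - K n \<le> V n"
        using low by (auto simp: ennreal_minus_le_iff K_def add.commute)
      show "\<forall>\<^sub>F n in sequentially. V n \<le> Vb" using up by auto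
      show "(\<lambda>n. Vb - K n) \<longlonglongrightarrow> Vb" using lo by simp
    qed
  qed
  then show ?thesis unfolding V_def Vb_def X_def .
qed

end
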